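(* Let $\rho\in\mathcal{L}_{0}$ be positive, let $\delta\in(0,\alpha]$ and let $\{w_{j}\}$ be a $(\rho,\delta)$-lattice on $\mathbb{D}$. For any $\xi\in\mathbb{D}$ and $k\in\mathbb{N}^{+}$, the set $$D_{k}(\xi)=\{z\in\mathbb{D}:|\xi-z|<2^{k}\delta\min(\rho(\xi),\rho(z))\}$$ contains at most $K$ points of the lattice $\{w_{j}\}$, where $K$ depends on $k$ but not on $\xi$.
   Context: $\mathbb{D}$ is the open unit disc. $C_0$ is the set of continuous $\rho$ on $\mathbb{D}$ with $\rho(z)\to0$ as $|z|\to1$. $\mathcal{L}$ is the set of real $\rho\in C_0$ with $\sup_{z\ne w}|\rho(z)-\rho(w)|/|z-w|<\infty$; $\mathcal{L}_0$ is the set of $\rho\in\mathcal{L}$ such that for every $\varepsilon>0$ there is a compact $E\subset\mathbb{D}$ with $|\rho(z)-\rho(w)|\le\varepsilon|z-w|$ for $z,w\in\mathbb{D}\setminus E$. $D^r(z)=D(z,r\rho(z))$ (Euclidean disc). There are constants $\alpha>0$, $s>0$ depending only on $\rho$ (with $\alpha$ fixed) such that for $0<r\le\alpha$ a $(\rho,r)$-lattice exists, where a $(\rho,r)$-lattice is a sequence $\{w_k\}\subset\mathbb{D}$ with $\mathbb{D}=\bigcup_kD^r(w_k)$, the discs $D^{sr}(w_k)$ pairwise disjoint, and $\{D^{2\alpha}(w_k)\}$ a covering of $\mathbb{D}$ of finite multiplicity. *)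

theory Defs
  imports "HOL-Analysis.Analysis"
begin

definition unit_disc :: "complex set" where
  "unit_disc = ball 0 1"

definition C0_disc :: "(complex \<Rightarrow> real) \<Rightarrow> bool" where
  "C0_disc \<rho> \<longleftrightarrow> continuous_on unit_disc \<rho> \<and>
     (\<forall>\<epsilon>>0. \<exists>r<1. \<forall>z\<in>unit_disc. r < norm z \<longrightarrow> \<bar>\<rho> z\<bar> < \<epsilon>)"

definition L_class :: "(complex \<Rightarrow> real) \<Rightarrow> bool" where
  "L_class \<rho> \<longleftrightarrow> C0_disc \<rho> \<and>
     (\<exists>L. \<forall>z\<in>unit_disc. \<forall>w\<in>unit_disc. \<bar>\<rho> z - \<rho> w\<bar> \<le> L * norm (z - w))"

definition L0_class :: "(complex \<Rightarrow> real) \<Rightarrow> bool" where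
  "L0_class \<rho> \<longleftrightarrow> L_class \<rho> \<and>
     (\<forall>\<epsilon>>0. \<exists>E. compact E \<and> E \<subseteq> unit_disc \<and>
        (\<forall>z\<in>unit_disc - E. \<forall>w\<in>unit_disc - E. \<bar>\<rho> z - \<rho> w\<bar> \<le> \<epsilon> * norm (z - w)))"

definition rdisc :: "(complex \<Rightarrow> real) \<Rightarrow> real \<Rightarrow> complex \<Rightarrow> complex set" where
  "rdisc \<rho> r z = ball z (r * \<rho> z)"

text \<open>A (rho,r)-lattice, relative to the fixed constants alpha and s.\<close>
definition is_lattice ::
  "real \<Rightarrow> real \<Rightarrow> (complex \<Rightarrow> real) \<Rightarrow> real \<Rightarrow> (nat \<Rightarrow> complex) \<Rightarrow> bool" where
  "is_lattice \<alpha> s \<rho> r w \<longleftrightarrow>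
     (\<forall>j. w j \<in> unit_disc) \<and>
     unit_disc = (\<Union>j. rdisc \<rho> r (w j)) \<and>
     (\<forall>i j. i \<noteq> j \<longrightarrow> rdisc \<rho> (s * r) (w i) \<inter> rdisc \<rho> (s * r) (w j) = {}) \<and>
     unit_disc \<subseteq> (\<Union>j. rdisc \<rho> (2 * \<alpha>) (w j)) \<and>
     (\<exists>N::nat. \<forall>z\<in>unit_disc. finite {j. z \<in> rdisc \<rho> (2 * \<alpha>) (w j)} \<and>
                               card {j. z \<in> rdisc \<rho> (2 * \<alpha>) (w j)} \<le> N)"

definition Dk :: "(complex \<Rightarrow> real) \<Rightarrow> real \<Rightarrow> nat \<Rightarrow> complex \<Rightarrow> complex set" where
  "Dk \<rho> \<delta> k \<xi> = {z \<in> unit_disc. norm (\<xi> - z) < 2 ^ k * \<delta> * min (\<rho> \<xi>) (\<rho> z)}"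

end

theory Submission
  imports Defs
begin

lemma floor_close:
  fixes a b h :: real
  assumes "h > 0" and "\<lfloor>a / h\<rfloor> = \<lfloor>b / h\<rfloor>"
  shows "\<bar>a - b\<bar> < h"
proof -
  obtain A B where AB: "A = a / h" "B = b / h" by blast
  have "\<lfloor>A\<rfloor> = \<lfloor>B\<rfloor>" using assms(2) AB by simp
  hence "\<bar>A - B\<bar> < 1" using floor_correct[of A] floor_correct[of B]
    unfolding abs_less_iff by linarith
  hence "\<bar>(a - b) / h\<bar> < 1" using AB by (simp add: diff_divide_distrib)
  hence "\<bar>a - b\<bar> / h < 1" using assms(1) by (simp add: abs_divide)
  thus ?thesis using assms(1) by (simp add: divide_less_eq_1_pos)
qed

lemma floor_bound:
  fixes x h T :: real
  assumes "h > 0" and "\<bar>x\<bar> < T * h"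
  shows "\<lfloor>x / h\<rfloor> \<in> {-\<lceil>T\<rceil>..\<lceil>T\<rceil>}"
proof -
  have "\<bar>x\<bar> / h < T" using assms by (simp add: pos_divide_less_eq)
  hence "\<bar>x / h\<bar> < T" using assms(1) by (simp add: abs_divide)
  hence "-T < x / h" "x / h < T" by linarith+
  hence "\<lfloor>x / h\<rfloor> \<le> \<lceil>T\<rceil>" "-\<lceil>T\<rceil> \<le> \<lfloor>x / h\<rfloor>"
    using floor_correct[of "x/h"] ceiling_correct[of T] by linarith+
  thus ?thesis by simp
qed

theorem lemma5p5:
  fixes \<rho> :: "complex \<Rightarrow> real" and \<alpha> s \<delta> :: real and w :: "nat \<Rightarrow> complex" and k :: nat
  assumes "\<alpha> > 0" and "s > 0"
    and "L0_class \<rho>" and "\<forall>z\<in>unit_disc. \<rho> z > 0"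
    and "0 < \<delta>" and "\<delta> \<le> \<alpha>"
    and "is_lattice \<alpha> s \<rho> \<delta> w"
    and "k \<ge> 1"
  shows "\<exists>K::nat. \<forall>\<xi>\<in>unit_disc.
           finite {j. w j \<in> Dk \<rho> \<delta> k \<xi>} \<and> card {j. w j \<in> Dk \<rho> \<delta> k \<xi>} \<le> K"
proof -
  from assms(3) obtain L0 where L0: "\<forall>z\<in>unit_disc. \<forall>w\<in>unit_disc. \<bar>\<rho> z - \<rho> w\<bar> \<le> L0 * norm (z - w)"
    unfolding L0_class_def L_class_def by blast
  define L where "L = max L0 0"
  have L: "\<bar>\<rho> z - \<rho> v\<bar> \<le> L * norm (z - v)" if "z \<in> unit_disc" "v \<in> unit_disc" for z v
  proof -
    have "L0 * norm (z - v) \<le> L * norm (z - v)" unfolding L_def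
      by (intro mult_right_mono) auto
    thus ?thesis using L0 that by fastforce
  qed
  have L_nn: "L \<ge> 0" unfolding L_def by simp
  define c where "c = 1 + L * 2 ^ k * \<delta>"
  have c_pos: "c \<ge> 1" unfolding c_def using L_nn assms(5) by simp
  define T where "T = 2 * 2 ^ k * c / s"
  define M where "M = \<lceil>T\<rceil>"
  define B where "B = {-M..M} \<times> {-M..M}"
  have finB: "finite B" unfolding B_def by simp
  have wdisc: "\<And>j. w j \<in> unit_disc" using assms(7) unfolding is_lattice_def by blast
  have disj: "\<And>i j. i \<noteq> j \<Longrightarrow> rdisc \<rho> (s * \<delta>) (w i) \<inter> rdisc \<rho> (s * \<delta>) (w j) = {}"
    using assms(7) unfolding is_lattice_def by blast
  have sep: "norm (w i - w j) \<ge> s * \<delta> * \<rho> (w i)" if "i \<noteq> j" for i j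
  proof -
    have "\<rho> (w j) > 0" using assms(4) wdisc by blast
    hence "w j \<in> rdisc \<rho> (s * \<delta>) (w j)" unfolding rdisc_def using assms(2,5) by simp
    hence "w j \<notin> rdisc \<rho> (s * \<delta>) (w i)" using disj[OF that] by blast
    thus ?thesis unfolding rdisc_def by (simp add: dist_norm)
  qed
  show ?thesis
  proof (intro exI[of _ "card B"] ballI)
    fix \<xi> assume xi: "\<xi> \<in> unit_disc"
    have rxi: "\<rho> \<xi> > 0" using assms(4) xi by blast
    define S where "S = {j. w j \<in> Dk \<rho> \<delta> k \<xi>}"
    define d where "d = s * \<delta> * \<rho> \<xi> / c"
    define h where "h = d / 2"
    have d_pos: "d > 0" unfolding d_def using assms(2,5) rxi c_pos by simp
    have h_pos: "h > 0" unfolding h_def using d_pos by simp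
    have inS: "norm (\<xi> - w j) < 2 ^ k * \<delta> * \<rho> \<xi> \<and> norm (\<xi> - w j) < 2 ^ k * \<delta> * \<rho> (w j)"
      if "j \<in> S" for j
    proof -
      have m: "cmod (\<xi> - w j) < 2 ^ k * \<delta> * min (\<rho> \<xi>) (\<rho> (w j))"
        using that unfolding S_def Dk_def by auto
      have p: "2 ^ k * \<delta> > 0" using assms(5) by simp
      have "2 ^ k * \<delta> * min (\<rho> \<xi>) (\<rho> (w j)) \<le> 2 ^ k * \<delta> * \<rho> \<xi>"
        "2 ^ k * \<delta> * min (\<rho> \<xi>) (\<rho> (w j)) \<le> 2 ^ k * \<delta> * \<rho> (w j)"
        using p by (intro mult_left_mono; simp)+
      thus ?thesis using m by linarith
    qed
    have rho_low: "\<rho> \<xi> \<le> c * \<rho> (w j)" if "j \<in> S" for j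
    proof -
      have "\<rho> \<xi> - \<rho> (w j) \<le> L * norm (\<xi> - w j)" using L[OF xi wdisc[of j]] by linarith
      also have "\<dots> \<le> L * (2 ^ k * \<delta> * \<rho> (w j))"
        using inS[OF that] L_nn by (intro mult_left_mono) auto
      finally show ?thesis unfolding c_def by (simp add: algebra_simps)
    qed
    have sepS: "norm (w i - w j) \<ge> d" if "i \<in> S" "j \<in> S" "i \<noteq> j" for i j
    proof -
      have "d \<le> s * \<delta> * \<rho> (w i)"
      proof -
        have "\<rho> \<xi> / c \<le> \<rho> (w i)" using rho_low[OF that(1)] c_pos
          by (simp add: divide_le_eq mult.commute)
        hence "s * \<delta> * (\<rho> \<xi> / c) \<le> s * \<delta> * \<rho> (w i)"
          using assms(2,5) by (intro mult_left_mono) auto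
        thus ?thesis unfolding d_def by simp
      qed
      thus ?thesis using sep[OF that(3)] by linarith
    qed
    define f where "f j = (\<lfloor>Re (w j - \<xi>) / h\<rfloor>, \<lfloor>Im (w j - \<xi>) / h\<rfloor>)" for j
    have Th: "2 ^ k * \<delta> * \<rho> \<xi> = T * h"
      unfolding T_def h_def d_def using c_pos assms(2) by (simp add: field_simps)
    have fB: "f ` S \<subseteq> B"
    proof
      fix p assume "p \<in> f ` S"
      then obtain j where j: "j \<in> S" "p = f j" by blast
      have n: "norm (w j - \<xi>) < T * h" using inS[OF j(1)] Th by (simp add: norm_minus_commute)
      have "\<bar>Re (w j - \<xi>)\<bar> < T * h" using abs_Re_le_cmod[of "w j - \<xi>"] n by linarith
      moreover have "\<bar>Im (w j - \<xi>)\<bar> < T * h" using abs_Im_le_cmod[of "w j - \<xi>"] n by linarith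
      ultimately show "p \<in> B" unfolding B_def M_def j(2) f_def
        using floor_bound[OF h_pos] by auto
    qed
    have inj: "inj_on f S"
    proof (rule inj_onI, rule ccontr)
      fix i j assume ij: "i \<in> S" "j \<in> S" "f i = f j" "i \<noteq> j"
      have "\<lfloor>Re (w i - \<xi>) / h\<rfloor> = \<lfloor>Re (w j - \<xi>) / h\<rfloor>" using ij(3) unfolding f_def by simp
      hence a: "\<bar>Re (w i - \<xi>) - Re (w j - \<xi>)\<bar> < h" by (rule floor_close[OF h_pos])
      have "\<lfloor>Im (w i - \<xi>) / h\<rfloor> = \<lfloor>Im (w j - \<xi>) / h\<rfloor>" using ij(3) unfolding f_def by simp
      hence b: "\<bar>Im (w i - \<xi>) - Im (w j - \<xi>)\<bar> < h" by (rule floor_close[OF h_pos])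
      have "norm (w i - w j) \<le> \<bar>Re (w i - w j)\<bar> + \<bar>Im (w i - w j)\<bar>" by (rule cmod_le)
      also have "\<dots> < 2 * h" using a b by simp
      finally show False using sepS[OF ij(1,2,4)] unfolding h_def by simp
    qed
    have finS: "finite S" using finite_imageD[OF finite_subset[OF fB finB] inj] .
    have "card S = card (f ` S)" using card_image[OF inj] by simp
    also have "\<dots> \<le> card B" using card_mono[OF finB fB] .
    finally show "finite {j. w j \<in> Dk \<rho> \<delta> k \<xi>} \<and> card {j. w j \<in> Dk \<rho> \<delta> k \<xi>} \<le> card B"
      using finS unfolding S_def by simp
  qed
qed

end
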